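(* Every quasiorder on a set $A$ is the intersection of a family of half-space quasiorders on $A$.
   Context: A quasiorder on $A$ is a reflexive and transitive relation; $\Delta_A=\{(a,a)\mid a\in A\}$. A quasiorder $\alpha$ on $A$ is a half-space if there is a quasiorder $\beta$ on $A$ with $\alpha\cup\beta=A\times A$ and $\alpha\cap\beta=\Delta_A$. *)

theory Defs
  imports Main
begin

definition quasiorder_on :: "'a set \<Rightarrow> 'a rel \<Rightarrow> bool" where
  "quasiorder_on A r \<longleftrightarrow> r \<subseteq> A \<times> A \<and> refl_on A r \<and> trans r"

definition half_space_on :: "'a set \<Rightarrow> 'a rel \<Rightarrow> bool" where
  "half_space_on A \<alpha> \<longleftrightarrow> quasiorder_on A \<alpha> \<and>
     (\<exists>\<beta>. quasiorder_on A \<beta> \<and> \<alpha> \<union> \<beta> = A \<times> A \<and> \<alpha> \<inter> \<beta> = Id_on A)"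

end

theory Submission
  imports Defs
begin

lemma hs:
  assumes q: "quasiorder_on A \<alpha>" and aA: "a \<in> A"
  shows "half_space_on A {(x,y). (x,y) \<in> A \<times> A \<and> ((a,x) \<in> \<alpha> \<longrightarrow> (a,y) \<in> \<alpha>)}"
proof -
  let ?g = "{(x,y). (x,y) \<in> A \<times> A \<and> ((a,x) \<in> \<alpha> \<longrightarrow> (a,y) \<in> \<alpha>)}"
  let ?b = "{(x,y). (x,y) \<in> A \<times> A \<and> (x = y \<or> ((a,x) \<in> \<alpha> \<and> (a,y) \<notin> \<alpha>))}"
  have "quasiorder_on A ?g"
    unfolding quasiorder_on_def refl_on_def trans_def by auto
  moreover have "quasiorder_on A ?b"
    unfolding quasiorder_on_def refl_on_def trans_def by auto
  moreover have "?g \<union> ?b = A \<times> A" by auto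
  moreover have "?g \<inter> ?b = Id_on A" unfolding Id_on_def by auto
  ultimately show ?thesis unfolding half_space_on_def by blast
qed

theorem theorem2p9:
  fixes A :: "'a set" and \<alpha> :: "'a rel"
  assumes "quasiorder_on A \<alpha>"
  shows "\<exists>F. (\<forall>\<gamma>\<in>F. half_space_on A \<gamma>) \<and> \<alpha> = (A \<times> A) \<inter> \<Inter>F"
proof (intro exI conjI)
  let ?F = "(\<lambda>a. {(x,y). (x,y) \<in> A \<times> A \<and> ((a,x) \<in> \<alpha> \<longrightarrow> (a,y) \<in> \<alpha>)}) ` A"
  show "\<forall>\<gamma>\<in>?F. half_space_on A \<gamma>" using hs[OF assms] by blast
  have sub: "\<alpha> \<subseteq> A \<times> A" and rf: "refl_on A \<alpha>" and tr: "trans \<alpha>"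
    using assms unfolding quasiorder_on_def by auto
  show "\<alpha> = (A \<times> A) \<inter> \<Inter>?F"
  proof
    show "\<alpha> \<subseteq> (A \<times> A) \<inter> \<Inter>?F" using sub tr unfolding trans_def by blast
  next
    show "(A \<times> A) \<inter> \<Inter>?F \<subseteq> \<alpha>"
    proof
      fix p assume p: "p \<in> (A \<times> A) \<inter> \<Inter>?F"
      obtain x y where pe: "p = (x,y)" by (cases p)
      have xA: "x \<in> A" using p pe by auto
      have "(x,y) \<in> {(u,v). (u,v) \<in> A \<times> A \<and> ((x,u) \<in> \<alpha> \<longrightarrow> (x,v) \<in> \<alpha>)}"
        using p pe xA by blast
      moreover have "(x,x) \<in> \<alpha>" using rf xA unfolding refl_on_def by auto
      ultimately show "p \<in> \<alpha>" using pe by auto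
    qed
  qed
qed

end
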